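(* Let $G$ be a compact abelian group. There exists a continuous strictly positive definite function on $G$ if and only if $G$ is metrisable.
   Context: A function $f: G \to \mathbb{C}$ is strictly positive definite if for all $n$, all pairwise distinct $x_1,\dots,x_n \in G$ and all $c_1,\dots,c_n \in \mathbb{C}\setminus\{0\}$ one has $\sum_{i,j=1}^n c_i \overline{c_j} f(x_j^{-1}x_i) > 0$. *)

theory Defs
  imports "HOL-Analysis.Analysis" "HOL-Library.Complex_Order"
begin

definition topological_group :: "'a::{topological_space, ab_group_add} itself \<Rightarrow> bool" where
  "topological_group _ \<longleftrightarrow>
     continuous_on (UNIV :: ('a \<times> 'a) set) (\<lambda>p. fst p + snd p) \<and>
     continuous_on (UNIV :: 'a set) (\<lambda>x. - x)"

text \<open>Strictly positive definite: for all n \<ge> 1, pairwise distinct x_1..x_n, nonzero c_1..c_n,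
  sum_{i,j} c_i conj(c_j) f(x_j^{-1} x_i) > 0 (in additive notation x_j^{-1} x_i = x_i - x_j;
  the order on complex is the one of HOL-Library.Complex_Order: real and positive).\<close>
definition strictly_pos_def :: "('a::ab_group_add \<Rightarrow> complex) \<Rightarrow> bool" where
  "strictly_pos_def f \<longleftrightarrow>
     (\<forall>n::nat. \<forall>x::nat \<Rightarrow> 'a. \<forall>c::nat \<Rightarrow> complex.
        n \<ge> 1 \<longrightarrow> inj_on x {..<n} \<longrightarrow> (\<forall>i<n. c i \<noteq> 0) \<longrightarrow>
        (\<Sum>i<n. \<Sum>j<n. c i * cnj (c j) * f (x i - x j)) > 0)"

end

theory Submission
  imports Defs
begin


lemma tg_add: "topological_group TYPE('a::{topological_space, ab_group_add}) \<Longrightarrow>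
   continuous_on (UNIV::('a\<times>'a) set) (\<lambda>p. fst p + snd p)"
  by (simp add: topological_group_def)

lemma tg_uminus: "topological_group TYPE('a::{topological_space, ab_group_add}) \<Longrightarrow>
   continuous_on (UNIV::'a set) (\<lambda>x. - x)"
  by (simp add: topological_group_def)

lemma tg_add_cont:
  fixes f g :: "'b::topological_space \<Rightarrow> 'a::{topological_space, ab_group_add}"
  assumes "topological_group TYPE('a)" "continuous_on UNIV f" "continuous_on UNIV g"
  shows "continuous_on UNIV (\<lambda>x. f x + g x)"
proof -
  have "continuous_on UNIV (\<lambda>x. (f x, g x))" using assms by (intro continuous_on_Pair)
  from continuous_on_compose[OF this continuous_on_subset[OF tg_add[OF assms(1)]]]
  show ?thesis by (simp add: o_def)
qed

lemma tg_uminus_cont: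
  fixes f :: "'b::topological_space \<Rightarrow> 'a::{topological_space, ab_group_add}"
  assumes "topological_group TYPE('a)" "continuous_on UNIV f"
  shows "continuous_on UNIV (\<lambda>x. - f x)"
  using continuous_on_compose[OF assms(2) continuous_on_subset[OF tg_uminus[OF assms(1)]]]
  by (simp add: o_def)

lemma tg_diff_cont:
  fixes f g :: "'b::topological_space \<Rightarrow> 'a::{topological_space, ab_group_add}"
  assumes "topological_group TYPE('a)" "continuous_on UNIV f" "continuous_on UNIV g"
  shows "continuous_on UNIV (\<lambda>x. f x - g x)"
  using tg_add_cont[OF assms(1,2) tg_uminus_cont[OF assms(1,3)]] by simp

lemma unif_cont:
  fixes g :: "'a::{topological_space, ab_group_add} \<Rightarrow> 'b::metric_space"
  assumes tg: "topological_group TYPE('a)" and cpt: "compact (UNIV::'a set)"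
    and g: "continuous_on UNIV g" and e: "e > 0"
  shows "\<exists>W. open W \<and> 0 \<in> W \<and> (\<forall>x. \<forall>w\<in>W. dist (g (x + w)) (g x) < e)"
proof -
  define S where "S = {p::'a\<times>'a. dist (g (fst p + snd p)) (g (snd p)) < e}"
  have c1: "continuous_on UNIV (\<lambda>p::'a\<times>'a. g (fst p + snd p))"
    by (rule continuous_on_compose2[OF g tg_add[OF tg]]) auto
  have c2: "continuous_on UNIV (\<lambda>p::'a\<times>'a. g (snd p))"
    by (rule continuous_on_compose2[OF g continuous_on_snd]) (auto intro: continuous_on_id)
  have "open S" unfolding S_def
    by (intro open_Collect_less continuous_on_dist c1 c2 continuous_on_const)
  moreover have "{0} \<times> UNIV \<subseteq> S" using e by (auto simp: S_def)
  ultimately obtain X0 where "0 \<in> X0" "open X0" "X0 \<times> UNIV \<subseteq> S"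
    using Elementary_Topology.tube_lemma[OF cpt] by metis
  moreover have "dist (g (x+w)) (g x) < e" if "w \<in> X0" for x w
  proof -
    from \<open>X0 \<times> UNIV \<subseteq> S\<close> that have "(w,x) \<in> S" by blast
    thus ?thesis by (simp add: S_def add.commute)
  qed
  ultimately show ?thesis by blast
qed

lemma forward:
  fixes f :: "'a::{t2_space, ab_group_add} \<Rightarrow> complex"
  assumes tg: "topological_group TYPE('a)" and cpt: "compact (UNIV :: 'a set)"
    and fc: "continuous_on UNIV f" and fp: "strictly_pos_def f"
  shows "metrizable_space (euclidean :: 'a topology)"
proof -
  have shc: "continuous_on UNIV (\<lambda>z. f (x + z))" for x
    by (rule continuous_on_compose2[OF fc tg_add_cont[OF tg continuous_on_const continuous_on_id]]) auto
  have inb: "(\<lambda>z. f (x + z)) \<in> bcontfun" for x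
  proof -
    have "compact (range (\<lambda>z. f (x + z)))"
      by (rule compact_continuous_image[OF shc cpt])
    then show ?thesis using shc by (simp add: bcontfun_def compact_imp_bounded)
  qed
  define \<phi> :: "'a \<Rightarrow> ('a \<Rightarrow>\<^sub>C complex)" where "\<phi> x = Bcontfun (\<lambda>z. f (x + z))" for x
  have \<phi>app: "apply_bcontfun (\<phi> x) z = f (x + z)" for x z
    using inb by (simp add: \<phi>_def Bcontfun_inverse)
  have \<phi>c: "continuous_on UNIV \<phi>"
    unfolding continuous_on_topological
  proof (intro ballI allI impI)
    fix y B assume "open B" "\<phi> y \<in> B"
    then obtain e where e: "e > 0" "ball (\<phi> y) e \<subseteq> B"
      using open_contains_ball by blast
    obtain W where W: "open W" "0 \<in> W" "\<And>x w. w \<in> W \<Longrightarrow> dist (f (x + w)) (f x) < e/2"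
      using unif_cont[OF tg cpt fc, of "e/2"] e by auto
    define A where "A = (\<lambda>x. x - y) -` W"
    have "open A" unfolding A_def
      by (rule open_vimage[OF W(1)]) (rule tg_diff_cont[OF tg continuous_on_id continuous_on_const])
    moreover have "y \<in> A" using W by (simp add: A_def)
    moreover have "\<phi> x \<in> B" if "x \<in> A" for x
    proof -
      have "dist (\<phi> x) (\<phi> y) \<le> e/2"
      proof (rule dist_bound)
        fix z
        have "x - y \<in> W" using that by (simp add: A_def)
        from W(3)[OF this, of "y + z"]
        have "dist (f ((y + z) + (x - y))) (f (y + z)) < e/2" .
        then show "dist (apply_bcontfun (\<phi> x) z) (apply_bcontfun (\<phi> y) z) \<le> e/2"
          by (simp add: \<phi>app algebra_simps)
      qed
      then show ?thesis using e by (intro subsetD[OF e(2)]) (simp add: dist_commute)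
    qed
    ultimately show "\<exists>A. open A \<and> y \<in> A \<and> (\<forall>x\<in>UNIV. x \<in> A \<longrightarrow> \<phi> x \<in> B)" by blast
  qed
  have \<phi>i: "inj \<phi>"
  proof (rule injI, rule ccontr)
    fix x y assume eq: "\<phi> x = \<phi> y" and ne: "x \<noteq> y"
    have fz: "f (x + z) = f (y + z)" for z using \<phi>app[of x z] \<phi>app[of y z] eq by simp
    define a where "a = x - y"
    have a0: "a \<noteq> 0" using ne by (simp add: a_def)
    have fa: "f a = f 0" using fz[of "-y"] by (simp add: a_def)
    have fa': "f (- a) = f 0" using fz[of "-x"] by (simp add: a_def)
    define xs where "xs = (\<lambda>i::nat. if i = 0 then a else 0)"
    define cs where "cs = (\<lambda>i::nat. if i = 0 then (1::complex) else -1)"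
    have "inj_on xs {..<2}" using a0 by (auto simp: xs_def inj_on_def less_2_cases_iff)
    moreover have "\<forall>i<2. cs i \<noteq> 0" by (simp add: cs_def)
    ultimately have "(\<Sum>i<2. \<Sum>j<2. cs i * cnj (cs j) * f (xs i - xs j)) > 0"
      using fp unfolding strictly_pos_def_def by (meson one_le_numeral)
    moreover have "(\<Sum>i<2. \<Sum>j<2. cs i * cnj (cs j) * f (xs i - xs j)) = 0"
      by (simp add: numeral_2_eq_2 xs_def cs_def fa fa')
    ultimately show False by simp
  qed
  have "embedding_map (euclidean::'a topology) (euclidean :: ('a \<Rightarrow>\<^sub>C complex) topology) \<phi>"
    apply (rule continuous_imp_embedding_map)
    using \<phi>c \<phi>i cpt by (auto simp: compact_space_def Hausdorff_space_euclidean)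
  then have "(euclidean::'a topology) homeomorphic_space
      subtopology (euclidean :: ('a \<Rightarrow>\<^sub>C complex) topology) (\<phi> ` UNIV)"
    using embedding_map_imp_homeomorphic_space by fastforce
  then show ?thesis
    using homeomorphic_metrizable_space metrizable_space_subtopology metrizable_space_euclidean by blast
qed




definition avg :: "'a::ab_group_add list \<Rightarrow> ('a \<Rightarrow> real) \<Rightarrow> 'a \<Rightarrow> real" where
  "avg as g x = (\<Sum>a\<leftarrow>as. g (x + a)) / real (length as)"

definition avgs :: "'a::ab_group_add list list \<Rightarrow> ('a \<Rightarrow> real) \<Rightarrow> 'a \<Rightarrow> real" where
  "avgs ass g = foldr avg ass g"

definition good :: "'a list list \<Rightarrow> bool" where
  "good ass \<longleftrightarrow> (\<forall>as\<in>set ass. as \<noteq> [])"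

lemma avgs_Nil[simp]: "avgs [] g = g" by (simp add: avgs_def)
lemma avgs_Cons[simp]: "avgs (as # ass) g = avg as (avgs ass g)" by (simp add: avgs_def)
lemma avgs_append: "avgs (ass @ bss) g = avgs ass (avgs bss g)" by (simp add: avgs_def)
lemma good_simps[simp]: "good []" "good (as # ass) \<longleftrightarrow> as \<noteq> [] \<and> good ass"
  "good (ass @ bss) \<longleftrightarrow> good ass \<and> good bss"
  by (auto simp: good_def)

lemma sum_list_le_const:
  fixes f :: "'b \<Rightarrow> real"
  assumes "\<And>a. a \<in> set as \<Longrightarrow> f a \<le> c"
  shows "(\<Sum>a\<leftarrow>as. f a) \<le> real (length as) * c"
proof -
  have "(\<Sum>a\<leftarrow>as. f a) \<le> (\<Sum>a\<leftarrow>as. c)" by (rule sum_list_mono) (use assms in auto)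
  also have "\<dots> = real (length as) * c" by (simp add: sum_list_triv)
  finally show ?thesis .
qed

lemma sum_list_ge_const:
  fixes f :: "'b \<Rightarrow> real"
  assumes "\<And>a. a \<in> set as \<Longrightarrow> c \<le> f a"
  shows "real (length as) * c \<le> (\<Sum>a\<leftarrow>as. f a)"
proof -
  have "(\<Sum>a\<leftarrow>as. c) \<le> (\<Sum>a\<leftarrow>as. f a)" by (rule sum_list_mono) (use assms in auto)
  also have "(\<Sum>a\<leftarrow>as. c) = real (length as) * c" by (simp add: sum_list_triv)
  finally show ?thesis by simp
qed

lemma avg_lower:
  assumes "as \<noteq> []" "\<And>x. lo \<le> g x"
  shows "lo \<le> avg as g x"
proof -
  have n: "real (length as) > 0" using assms(1) by simp
  have "real (length as) * lo \<le> (\<Sum>a\<leftarrow>as. g (x + a))"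
    by (rule sum_list_ge_const) (use assms in auto)
  then show ?thesis using n by (simp add: avg_def field_simps)
qed

lemma avg_upper:
  assumes "as \<noteq> []" "\<And>x. g x \<le> hi"
  shows "avg as g x \<le> hi"
proof -
  have n: "real (length as) > 0" using assms(1) by simp
  have "(\<Sum>a\<leftarrow>as. g (x + a)) \<le> real (length as) * hi"
    by (rule sum_list_le_const) (use assms in auto)
  then show ?thesis using n by (simp add: avg_def field_simps)
qed

lemma avgs_lower:
  assumes "good ass" "\<And>x. lo \<le> g x"
  shows "lo \<le> avgs ass g x"
  using assms(1)
proof (induction ass arbitrary: x)
  case Nil then show ?case using assms by simp
next
  case (Cons as ass)
  then show ?case using avg_lower[of as lo "avgs ass g" x] by simp
qed

lemma avgs_upper:
  assumes "good ass" "\<And>x. g x \<le> hi"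
  shows "avgs ass g x \<le> hi"
  using assms(1)
proof (induction ass arbitrary: x)
  case Nil then show ?case using assms by simp
next
  case (Cons as ass)
  then show ?case using avg_upper[of as "avgs ass g" hi x] by simp
qed

lemma avgs_bounds:
  assumes "good ass" "\<And>x. lo \<le> g x" "\<And>x. g x \<le> hi"
  shows "lo \<le> avgs ass g x \<and> avgs ass g x \<le> hi"
  using avgs_lower[OF assms(1,2)] avgs_upper[OF assms(1,3)] by simp

lemma avgs_near:
  assumes "good ass" "\<And>x. \<bar>g x - c\<bar> \<le> e"
  shows "\<bar>avgs ass g x - c\<bar> \<le> e"
proof -
  have "c - e \<le> g x" "g x \<le> c + e" for x using assms(2)[of x] by (simp_all add: abs_le_iff)
  then show ?thesis using avgs_bounds[OF assms(1), of "c - e" g "c + e" x] by (simp add: abs_le_iff)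
qed

lemma avg_add: "avg as (\<lambda>x. f x + g x) = (\<lambda>x. avg as f x + avg as g x)"
  by (rule ext) (simp add: avg_def sum_list_addf add_divide_distrib)

lemma avg_scale: "avg as (\<lambda>x. r * f x) = (\<lambda>x. r * avg as f x)"
  by (rule ext) (simp add: avg_def sum_list_const_mult)

lemma avgs_add: "avgs ass (\<lambda>x. f x + g x) = (\<lambda>x. avgs ass f x + avgs ass g x)"
  by (induction ass) (simp_all add: avg_add)

lemma avgs_scale: "avgs ass (\<lambda>x. r * f x) = (\<lambda>x. r * avgs ass f x)"
  by (induction ass) (simp_all add: avg_scale)

lemma avg_comm: "avg as (avg bs g) = avg bs (avg as g)"
proof (rule ext)
  fix x
  have "avg as (avg bs g) x =
     (\<Sum>i<length as. \<Sum>j<length bs. g (x + as!i + bs!j)) / (real (length bs) * real (length as))"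
    by (simp add: avg_def sum_list_sum_nth atLeast0LessThan sum_divide_distrib add.assoc)
  also have "\<dots> = (\<Sum>j<length bs. \<Sum>i<length as. g (x + bs!j + as!i)) / (real (length bs) * real (length as))"
    by (subst sum.swap) (simp add: ac_simps)
  also have "\<dots> = (\<Sum>j<length bs. \<Sum>i<length as. g (x + bs!j + as!i)) / (real (length as) * real (length bs))"
    by (metis mult.commute)
  also have "\<dots> = avg bs (avg as g) x"
    by (simp add: avg_def sum_list_sum_nth atLeast0LessThan sum_divide_distrib add.assoc)
  finally show "avg as (avg bs g) x = avg bs (avg as g) x" .
qed

lemma avg_avgs_comm: "avg as (avgs bss g) = avgs bss (avg as g)"
  by (induction bss) (simp_all add: avg_comm)

lemma avgs_comm: "avgs ass (avgs bss g) = avgs bss (avgs ass g)"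
  by (induction ass) (simp_all add: avg_avgs_comm)

lemma avg_single: "avg [a] g = (\<lambda>x. g (x + a))"
  by (rule ext) (simp add: avg_def)

lemma avg_trans: "avg as (\<lambda>x. g (x + c)) = (\<lambda>x. avg as g (x + c))"
  by (rule ext) (simp add: avg_def ac_simps)

lemma avgs_trans: "avgs ass (\<lambda>x. g (x + c)) = (\<lambda>x. avgs ass g (x + c))"
  by (induction ass) (simp_all add: avg_trans)

definition approx :: "('a::ab_group_add \<Rightarrow> real) \<Rightarrow> real \<Rightarrow> bool" where
  "approx g c \<longleftrightarrow> (\<forall>e>0. \<exists>ass. good ass \<and> (\<forall>x. \<bar>avgs ass g x - c\<bar> \<le> e))"

definition mean :: "('a::ab_group_add \<Rightarrow> real) \<Rightarrow> real" where
  "mean g = (THE c. approx g c)"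

lemma approx_uniq:
  assumes "approx g c" "approx g c'" shows "c = c'"
proof (rule ccontr)
  assume ne: "c \<noteq> c'"
  define e where "e = \<bar>c - c'\<bar> / 3"
  have e: "e > 0" using ne by (simp add: e_def)
  obtain ass where a: "good ass" "\<And>x. \<bar>avgs ass g x - c\<bar> \<le> e" using assms(1) e approx_def by metis
  obtain bss where b: "good bss" "\<And>x. \<bar>avgs bss g x - c'\<bar> \<le> e" using assms(2) e approx_def by metis
  have "\<bar>avgs bss (avgs ass g) 0 - c\<bar> \<le> e" by (rule avgs_near[OF b(1) a(2)])
  moreover have "\<bar>avgs ass (avgs bss g) 0 - c'\<bar> \<le> e" by (rule avgs_near[OF a(1) b(2)])
  ultimately show False using avgs_comm[of ass bss g] e_def e by (auto simp: abs_if split: if_splits)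
qed

lemma mean_eq: "approx g c \<Longrightarrow> mean g = c"
  unfolding mean_def using approx_uniq by blast

lemma approx_avgs:
  assumes "approx g c" "good bss" shows "approx (avgs bss g) c"
  unfolding approx_def
proof (intro allI impI)
  fix e :: real assume "e > 0"
  then obtain ass where a: "good ass" "\<And>x. \<bar>avgs ass g x - c\<bar> \<le> e" using assms(1) approx_def by metis
  have "\<bar>avgs bss (avgs ass g) x - c\<bar> \<le> e" for x by (rule avgs_near[OF assms(2) a(2)])
  then show "\<exists>ass. good ass \<and> (\<forall>x. \<bar>avgs ass (avgs bss g) x - c\<bar> \<le> e)"
    using a(1) avgs_comm[of ass bss g] by (auto intro!: exI[of _ ass])
qed

lemma approx_trans:
  assumes "approx g c" shows "approx (\<lambda>x. g (x + a)) c"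
  using approx_avgs[OF assms, of "[[a]]"] by (simp add: avg_single)

lemma approx_add:
  assumes "approx f c" "approx g d" shows "approx (\<lambda>x. f x + g x) (c + d)"
  unfolding approx_def
proof (intro allI impI)
  fix e :: real assume "e > 0"
  then obtain ass where a: "good ass" "\<And>x. \<bar>avgs ass f x - c\<bar> \<le> e/2"
    using assms(1) approx_def by (metis half_gt_zero)
  have "approx (avgs ass g) d" by (rule approx_avgs[OF assms(2) a(1)])
  then obtain bss where b: "good bss" "\<And>x. \<bar>avgs bss (avgs ass g) x - d\<bar> \<le> e/2"
    using \<open>e > 0\<close> approx_def by (metis half_gt_zero)
  have h1: "\<bar>avgs bss (avgs ass f) x - c\<bar> \<le> e/2" for x by (rule avgs_near[OF b(1) a(2)])
  have "\<bar>avgs (bss @ ass) (\<lambda>x. f x + g x) x - (c + d)\<bar> \<le> e" for x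
    using b(2)[of x] h1[of x] by (auto simp: avgs_append avgs_add abs_if split: if_splits)
  then show "\<exists>ass. good ass \<and> (\<forall>x. \<bar>avgs ass (\<lambda>x. f x + g x) x - (c + d)\<bar> \<le> e)"
    using a(1) b(1) by (intro exI[of _ "bss @ ass"]) simp
qed

lemma approx_scale:
  assumes "approx f c" shows "approx (\<lambda>x. r * f x) (r * c)"
  unfolding approx_def
proof (intro allI impI)
  fix e :: real assume "e > 0"
  then have "e / (\<bar>r\<bar> + 1) > 0" by simp
  then obtain ass where a: "good ass" "\<And>x. \<bar>avgs ass f x - c\<bar> \<le> e / (\<bar>r\<bar> + 1)"
    using assms approx_def by metis
  have "\<bar>avgs ass (\<lambda>x. r * f x) x - r * c\<bar> \<le> e" for x
  proof -
    have "\<bar>avgs ass (\<lambda>x. r * f x) x - r * c\<bar> = \<bar>r\<bar> * \<bar>avgs ass f x - c\<bar>"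
      by (simp add: avgs_scale abs_mult[symmetric] right_diff_distrib)
    also have "\<dots> \<le> (\<bar>r\<bar> + 1) * (e / (\<bar>r\<bar> + 1))"
      by (rule mult_mono) (use a(2)[of x] in auto)
    also have "\<dots> = e" by simp
    finally show ?thesis .
  qed
  then show "\<exists>ass. good ass \<and> (\<forall>x. \<bar>avgs ass (\<lambda>x. r * f x) x - r * c\<bar> \<le> e)"
    using a(1) by blast
qed

lemma approx_zero: "approx (\<lambda>x. 0) 0"
  unfolding approx_def by (auto intro!: exI[of _ "[]"])

lemma approx_sum:
  assumes "finite I" "\<And>i. i \<in> I \<Longrightarrow> approx (f i) (c i)"
  shows "approx (\<lambda>x. \<Sum>i\<in>I. f i x) (\<Sum>i\<in>I. c i)"
  using assms by (induction I rule: finite_induct) (simp_all add: approx_zero approx_add)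

lemma approx_lower:
  assumes "approx g c" "\<And>x. lo \<le> g x" shows "lo \<le> c"
proof (rule field_le_epsilon)
  fix e :: real assume "e > 0"
  then obtain ass where a: "good ass" "\<And>x. \<bar>avgs ass g x - c\<bar> \<le> e" using assms(1) approx_def by metis
  have "lo \<le> avgs ass g 0" using avgs_lower[OF a(1) assms(2)] by simp
  then show "lo \<le> c + e" using a(2)[of 0] by simp
qed

lemma approx_upper:
  assumes "approx g c" "\<And>x. g x \<le> hi" shows "c \<le> hi"
proof -
  have "approx (\<lambda>x. (-1) * g x) ((-1) * c)" by (rule approx_scale[OF assms(1)])
  from approx_lower[OF this, of "-hi"] assms(2) show ?thesis by simp
qed




lemma shift_cont:
  fixes g :: "'a::{topological_space, ab_group_add} \<Rightarrow> 'b::topological_space"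
  assumes tg: "topological_group TYPE('a)" and g: "continuous_on UNIV g"
  shows "continuous_on UNIV (\<lambda>x. g (x + c))"
  by (rule continuous_on_compose2[OF g tg_add_cont[OF tg continuous_on_id continuous_on_const]]) auto

lemma avg_cont:
  fixes g :: "'a::{topological_space, ab_group_add} \<Rightarrow> real"
  assumes tg: "topological_group TYPE('a)" and g: "continuous_on UNIV g"
  shows "continuous_on UNIV (avg as g)"
proof (cases "as = []")
  case True
  then have "avg as g = (\<lambda>x. 0)" by (simp add: avg_def fun_eq_iff)
  then show ?thesis by simp
next
  case False
  have "avg as g = (\<lambda>x. (\<Sum>i<length as. g (x + as!i)) / real (length as))"
    by (rule ext) (simp add: avg_def sum_list_sum_nth atLeast0LessThan)
  moreover have "continuous_on UNIV (\<lambda>x. (\<Sum>i<length as. g (x + as!i)) / real (length as))"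
    by (intro continuous_on_divide continuous_on_sum continuous_on_const shift_cont[OF tg g]) (use False in auto)
  ultimately show ?thesis by simp
qed

lemma avgs_cont:
  fixes g :: "'a::{topological_space, ab_group_add} \<Rightarrow> real"
  assumes tg: "topological_group TYPE('a)" and g: "continuous_on UNIV g"
  shows "continuous_on UNIV (avgs ass g)"
  by (induction ass) (simp_all add: g avg_cont[OF tg])

lemma avgs_equi:
  fixes g :: "'a::ab_group_add \<Rightarrow> real"
  assumes "good ass" "\<And>y. \<bar>g (y + w) - g y\<bar> \<le> e"
  shows "\<bar>avgs ass g (y + w) - avgs ass g y\<bar> \<le> e"
proof -
  have "avgs ass (\<lambda>z. g (z + w) + (-1) * g z) = (\<lambda>x. avgs ass (\<lambda>z. g (z + w)) x + avgs ass (\<lambda>z. (-1) * g z) x)"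
    by (rule avgs_add)
  also have "\<dots> = (\<lambda>x. avgs ass g (x + w) + (-1) * avgs ass g x)"
    by (simp add: avgs_trans avgs_scale[of ass "-1" g, simplified])
  finally have eq: "avgs ass (\<lambda>z. g (z + w) - g z) y = avgs ass g (y + w) - avgs ass g y"
    by (simp add: fun_eq_iff)
  have "\<bar>avgs ass (\<lambda>z. g (z + w) - g z) y - 0\<bar> \<le> e"
    by (rule avgs_near[OF assms(1)]) (use assms(2) in simp)
  then show ?thesis using eq by simp
qed

lemma finite_cover:
  fixes W :: "'a::{topological_space, ab_group_add} set"
  assumes tg: "topological_group TYPE('a)" and cpt: "compact (UNIV::'a set)"
    and W: "open W" "0 \<in> W"
  shows "\<exists>bs. bs \<noteq> [] \<and> (\<forall>y. \<exists>b\<in>set bs. y - b \<in> W)"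
proof -
  have op: "open ((\<lambda>y. y - b) -` W)" for b
    by (rule open_vimage[OF W(1)]) (rule tg_diff_cont[OF tg continuous_on_id continuous_on_const])
  have cov: "UNIV \<subseteq> (\<Union>b\<in>UNIV. (\<lambda>y. y - b) -` W)" using W(2) by auto
  obtain t where t: "finite t" "UNIV \<subseteq> (\<Union>b\<in>t. (\<lambda>y. y - b) -` W)"
    using compactE_image[OF cpt, of UNIV "\<lambda>b. (\<lambda>y. y - b) -` W"] op cov by (metis subset_UNIV)
  obtain bs where bs: "set bs = t" using finite_list[OF t(1)] by blast
  have "bs \<noteq> []" using t(2) bs by auto
  moreover have "\<forall>y. \<exists>b\<in>set bs. y - b \<in> W" using t(2) bs by blast
  ultimately show ?thesis by blast
qed

lemma osc_small:
  fixes g :: "'a::{topological_space, ab_group_add} \<Rightarrow> real"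
  assumes tg: "topological_group TYPE('a)" and cpt: "compact (UNIV::'a set)"
    and g: "continuous_on UNIV g" and e: "e > 0"
  shows "\<exists>ass m. good ass \<and> (\<forall>x. m \<le> avgs ass g x \<and> avgs ass g x \<le> m + e)"
proof -
  obtain W where W: "open W" "0 \<in> W" "\<And>x w. w \<in> W \<Longrightarrow> dist (g (x + w)) (g x) < e/4"
    using unif_cont[OF tg cpt g, of "e/4"] e by auto
  have equi: "\<bar>avgs ass g (y + w) - avgs ass g y\<bar> \<le> e/4" if "good ass" "w \<in> W" for ass y w
    by (rule avgs_equi[OF that(1)]) (use W(3)[OF that(2)] in \<open>simp add: dist_real_def less_imp_le\<close>)
  obtain bs where bs: "bs \<noteq> []" "\<And>y. \<exists>b\<in>set bs. y - b \<in> W"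
    using finite_cover[OF tg cpt W(1,2)] by blast
  define N where "N = real (length bs)"
  have N1: "N \<ge> 1" using bs(1) by (simp add: N_def Suc_le_eq)
  obtain p0 where p0: "\<And>y. g p0 \<le> g y"
    using continuous_attains_inf[OF cpt _ g] by auto
  obtain p1 where p1: "\<And>y. g y \<le> g p1"
    using continuous_attains_sup[OF cpt _ g] by auto
  define D0 where "D0 = g p1 - g p0 + 1"
  define r where "r = 1 - 3 / (4 * N)"
  have r0: "0 \<le> r" "r < 1" using N1 by (simp_all add: r_def field_simps)
  have claim: "\<exists>ass m. good ass \<and> (\<forall>x. m \<le> avgs ass g x \<and> avgs ass g x \<le> m + max e (D0 * r^k))" for k
  proof (induction k)
    case 0
    show ?case
    proof (rule exI[of _ "[]"], rule exI[of _ "g p0"], intro conjI allI)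
      fix x
      show "g p0 \<le> avgs [] g x" using p0[of x] by simp
      show "avgs [] g x \<le> g p0 + max e (D0 * r ^ 0)" using p1[of x] by (simp add: D0_def max_def)
    qed simp
  next
    case (Suc k)
    then obtain ass m where am: "good ass" "\<And>x. m \<le> avgs ass g x" "\<And>x. avgs ass g x \<le> m + max e (D0 * r^k)"
      by blast
    show ?case
    proof (cases "D0 * r^k \<le> e")
      case True
      have "avgs ass g x \<le> m + max e (D0 * r ^ Suc k)" for x
        using am(3)[of x] True by (simp add: max_def)
      then show ?thesis using am by (intro exI[of _ ass] exI[of _ m]) auto
    next
      case False
      define B where "B = D0 * r^k"
      have B: "e < B" using False by (simp add: B_def)
      define h where "h = avgs ass g"
      have hc: "continuous_on UNIV h" unfolding h_def by (rule avgs_cont[OF tg g])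
      obtain p where p: "\<And>y. h p \<le> h y"
        using continuous_attains_inf[OF cpt _ hc] by auto
      have hub: "h y \<le> m + B" for y using am(3)[of y] B by (simp add: h_def B_def)
      have hlb: "m \<le> h y" for y using am(2)[of y] by (simp add: h_def)
      define as' where "as' = map (\<lambda>b. p - b) bs"
      have lower: "h p \<le> avg as' h x" for x
        by (rule avg_lower) (use bs(1) p in \<open>auto simp: as'_def\<close>)
      have upper: "avg as' h x \<le> h p + B * r" for x
      proof -
        obtain b0 where b0: "b0 \<in> set bs" "x - b0 \<in> W" using bs(2) by blast
        have eqx: "x + (p - b0) = p + (x - b0)" by (simp add: algebra_simps)
        have t0: "h (x + (p - b0)) \<le> h p + e/4"
          using equi[OF am(1) b0(2), of p] unfolding h_def eqx by (auto simp: abs_if split: if_splits)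
        have "(\<Sum>b\<leftarrow>bs. h (x + (p - b))) = h (x + (p - b0)) + (\<Sum>b\<leftarrow>remove1 b0 bs. h (x + (p - b)))"
          by (rule sum_list_map_remove1[OF b0(1)])
        also have "(\<Sum>b\<leftarrow>remove1 b0 bs. h (x + (p - b))) \<le> real (length (remove1 b0 bs)) * (m + B)"
          by (rule sum_list_le_const) (rule hub)
        also have "real (length (remove1 b0 bs)) = N - 1"
          using b0(1) bs(1) by (simp add: N_def length_remove1 of_nat_diff Suc_le_eq length_pos_if_in_set)
        finally have S: "(\<Sum>b\<leftarrow>bs. h (x + (p - b))) \<le> h p + e/4 + (N - 1) * (m + B)"
          using t0 by linarith
        have mm: "(N - 1) * m \<le> (N - 1) * h p" using N1 hlb[of p] by (intro mult_left_mono) auto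
        have "h p + e/4 + (N - 1) * (m + B) \<le> N * (h p + B * r)"
        proof -
          have e1: "N * (B * r) = N * B - 3 * B / 4" using N1 by (simp add: r_def field_simps)
          have e2: "(N - 1) * (m + B) = (N - 1) * m + N * B - B" by (simp add: algebra_simps)
          have e3: "N * (h p + B * r) = N * h p + N * (B * r)" by (simp add: algebra_simps)
          have e4: "(N - 1) * h p = N * h p - h p" by (simp add: algebra_simps)
          show ?thesis using mm B e1 e2 e3 e4 by linarith
        qed
        with S have "(\<Sum>b\<leftarrow>bs. h (x + (p - b))) \<le> N * (h p + B * r)" by linarith
        moreover have avgeq: "avg as' h x = (\<Sum>b\<leftarrow>bs. h (x + (p - b))) / N"
          by (simp add: avg_def as'_def N_def o_def)
        ultimately show ?thesis using N1 by (simp add: divide_le_eq mult.commute)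
      qed
      show ?thesis
      proof (intro exI[of _ "as' # ass"] exI[of _ "h p"] conjI allI)
        show "good (as' # ass)" using am(1) bs(1) by (simp add: as'_def)
        fix x
        show "h p \<le> avgs (as' # ass) g x" using lower by (simp add: h_def)
        have "D0 * r ^ Suc k = B * r" by (simp add: B_def)
        then have "B * r \<le> max e (D0 * r ^ Suc k)" by (metis max.cobounded2)
        then show "avgs (as' # ass) g x \<le> h p + max e (D0 * r ^ Suc k)"
          using upper[of x] unfolding avgs_Cons h_def[symmetric] by linarith
      qed
    qed
  qed
  have "(\<lambda>k. r ^ k) \<longlonglongrightarrow> 0" by (rule LIMSEQ_realpow_zero[OF r0])
  moreover have "e / D0 > 0" using e p0[of p1] by (simp add: D0_def)
  ultimately have "\<forall>\<^sub>F k in sequentially. r ^ k < e / D0" by (rule order_tendstoD(2))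
  then obtain k where k: "r ^ k < e / D0" by (auto simp: eventually_sequentially)
  have D0p: "D0 > 0" using p0[of p1] by (simp add: D0_def)
  have "D0 * r ^ k \<le> e" using k D0p by (simp add: field_simps)
  then have "max e (D0 * r ^ k) = e" by simp
  with claim[of k] show ?thesis by metis
qed

lemma approx_exists:
  fixes g :: "'a::{topological_space, ab_group_add} \<Rightarrow> real"
  assumes tg: "topological_group TYPE('a)" and cpt: "compact (UNIV::'a set)"
    and g: "continuous_on UNIV g"
  shows "approx g (mean g)"
proof -
  have "\<forall>n. \<exists>ass m. good ass \<and> (\<forall>x. m \<le> avgs ass g x \<and> avgs ass g x \<le> m + 1 / real (Suc n))"
    using osc_small[OF tg cpt g] by simp
  then obtain A M where AM: "\<And>n. good (A n)" "\<And>n x. M n \<le> avgs (A n) g x"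
    "\<And>n x. avgs (A n) g x \<le> M n + 1 / real (Suc n)"
    by metis
  have cross: "M n \<le> M k + 1 / real (Suc k)" for n k
  proof -
    have "M n \<le> avgs (A k) (avgs (A n) g) 0"
      by (rule avgs_lower[OF AM(1)[of k]]) (rule AM(2))
    also have "\<dots> = avgs (A n) (avgs (A k) g) 0" by (simp only: avgs_comm)
    also have "\<dots> \<le> M k + 1 / real (Suc k)"
      by (rule avgs_upper[OF AM(1)[of n]]) (rule AM(3))
    finally show ?thesis .
  qed
  define c where "c = (SUP n. M n)"
  have bdd: "bdd_above (range M)" using cross[of _ 0] by (auto intro!: bdd_aboveI)
  have cu: "M k \<le> c" for k unfolding c_def by (rule cSUP_upper[OF _ bdd]) auto
  have cl: "c \<le> M k + 1 / real (Suc k)" for k unfolding c_def by (rule cSUP_least) (simp, use cross in blast)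
  have "approx g c"
    unfolding approx_def
  proof (intro allI impI)
    fix e :: real assume "e > 0"
    then obtain k where k: "1 / real (Suc k) < e" using nat_approx_posE by blast
    have "\<bar>avgs (A k) g x - c\<bar> \<le> e" for x
      using AM(2)[of k x] AM(3)[of k x] cu[of k] cl[of k] k by (simp add: abs_le_iff)
    then show "\<exists>ass. good ass \<and> (\<forall>x. \<bar>avgs ass g x - c\<bar> \<le> e)" using AM(1) by blast
  qed
  then show ?thesis using mean_eq by metis
qed




locale cag =
  fixes ty :: "'a::{topological_space, ab_group_add} itself"
  assumes tg: "topological_group TYPE('a)" and cpt: "compact (UNIV::'a set)"
begin

lemma ap: "continuous_on UNIV (g::'a \<Rightarrow> real) \<Longrightarrow> approx g (mean g)"
  by (rule approx_exists[OF tg cpt])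

lemma mean_lower: "continuous_on UNIV (g::'a \<Rightarrow> real) \<Longrightarrow> (\<And>x. lo \<le> g x) \<Longrightarrow> lo \<le> mean g"
  using approx_lower ap by blast

lemma mean_faithful:
  fixes g :: "'a \<Rightarrow> real"
  assumes g: "continuous_on UNIV g" and nn: "\<And>x. 0 \<le> g x" and gp: "g p > 0"
  shows "mean g > 0"
proof -
  define V where "V = {x. g p / 2 < g x}"
  have "open V" unfolding V_def by (intro open_Collect_less continuous_on_const g)
  define W where "W = (\<lambda>w. w + p) -` V"
  have "open W" unfolding W_def
    by (rule open_vimage[OF \<open>open V\<close>]) (rule tg_add_cont[OF tg continuous_on_id continuous_on_const])
  moreover have "0 \<in> W" using gp by (simp add: W_def V_def)
  ultimately obtain bs where bs: "bs \<noteq> []" "\<And>y. \<exists>b\<in>set bs. y - b \<in> W"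
    using finite_cover[OF tg cpt] by blast
  define as where "as = map (\<lambda>b. p - b) bs"
  define N where "N = real (length bs)"
  have N: "N > 0" using bs(1) by (simp add: N_def)
  have lb: "g p / 2 / N \<le> avgs [as] g y" for y
  proof -
    obtain b0 where b0: "b0 \<in> set bs" "y - b0 \<in> W" using bs(2) by blast
    have t0: "g p / 2 < g (y + (p - b0))" using b0(2) by (simp add: W_def V_def algebra_simps)
    have "(\<Sum>b\<leftarrow>bs. g (y + (p - b))) = g (y + (p - b0)) + (\<Sum>b\<leftarrow>remove1 b0 bs. g (y + (p - b)))"
      by (rule sum_list_map_remove1[OF b0(1)])
    moreover have "0 \<le> (\<Sum>b\<leftarrow>remove1 b0 bs. g (y + (p - b)))"
      by (rule sum_list_nonneg) (auto intro: nn)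
    ultimately have "g p / 2 \<le> (\<Sum>b\<leftarrow>bs. g (y + (p - b)))" using t0 by linarith
    then have "g p / 2 / N \<le> (\<Sum>b\<leftarrow>bs. g (y + (p - b))) / N"
      by (rule divide_right_mono) (use N in simp)
    moreover have "avgs [as] g y = (\<Sum>b\<leftarrow>bs. g (y + (p - b))) / N"
      by (simp add: avg_def as_def N_def o_def)
    ultimately show ?thesis by simp
  qed
  have "approx (avgs [as] g) (mean g)" by (rule approx_avgs[OF ap[OF g]]) (simp add: as_def bs(1))
  then have "g p / 2 / N \<le> mean g" using approx_lower lb by blast
  moreover have "g p / 2 / N > 0" using gp N by simp
  ultimately show ?thesis by linarith
qed

definition H :: "('a \<Rightarrow> real) \<Rightarrow> 'a \<Rightarrow> real" where
  "H g x = mean (\<lambda>t. g (t + x) * g t)"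

lemma prod_cont: "continuous_on UNIV (g::'a\<Rightarrow>real) \<Longrightarrow> continuous_on UNIV (\<lambda>t. g (t + x) * g (t + y))"
  by (intro continuous_on_mult shift_cont[OF tg])

lemma prod_cont0: "continuous_on UNIV (g::'a\<Rightarrow>real) \<Longrightarrow> continuous_on UNIV (\<lambda>t. g (t + x) * g t)"
  using prod_cont[of g x 0] by simp

lemma H_approx: "continuous_on UNIV g \<Longrightarrow> approx (\<lambda>t. g (t + x) * g t) (H g x)"
  unfolding H_def by (rule ap[OF prod_cont0])

lemma H_approx2:
  assumes g: "continuous_on UNIV g"
  shows "approx (\<lambda>s. g (s + u) * g (s + v)) (H g (u - v))"
proof -
  have "approx (\<lambda>s. g (s + v + (u - v)) * g (s + v)) (H g (u - v))"
    using approx_trans[OF H_approx[OF g, of "u - v"], of v] by simp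
  then show ?thesis by (simp add: algebra_simps)
qed

lemma H_even:
  assumes g: "continuous_on UNIV g"
  shows "H g (- x) = H g x"
proof -
  have "approx (\<lambda>s. g (s + 0) * g (s + x)) (H g (0 - x))" by (rule H_approx2[OF g])
  moreover have "approx (\<lambda>s. g (s + 0) * g (s + x)) (H g x)"
    using H_approx[OF g, of x] by (simp add: mult.commute)
  ultimately show ?thesis using approx_uniq by force
qed

lemma H_bound:
  assumes g: "continuous_on UNIV g" and b: "\<And>x. \<bar>g x\<bar> \<le> 1"
  shows "\<bar>H g x\<bar> \<le> 1"
proof -
  have "\<bar>g (t + x) * g t\<bar> \<le> 1" for t
    using b[of "t + x"] b[of t] by (simp add: abs_mult mult_le_one)
  then have "-1 \<le> g (t + x) * g t" "g (t + x) * g t \<le> 1" for t by (simp_all add: abs_le_iff)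
  then show ?thesis using approx_lower[OF H_approx[OF g]] approx_upper[OF H_approx[OF g]]
    by (simp add: abs_le_iff)
qed

lemma H_cont:
  assumes g: "continuous_on UNIV g" and b: "\<And>x. \<bar>g x\<bar> \<le> 1"
  shows "continuous_on UNIV (H g)"
  unfolding continuous_on_topological
proof (intro ballI allI impI)
  fix y B assume "open B" "H g y \<in> B"
  then obtain e where e: "e > 0" "ball (H g y) e \<subseteq> B"
    using open_contains_ball by blast
  obtain W where W: "open W" "0 \<in> W" "\<And>x w. w \<in> W \<Longrightarrow> dist (g (x + w)) (g x) < e/2"
    using unif_cont[OF tg cpt g, of "e/2"] e by auto
  define A where "A = (\<lambda>x. x - y) -` W"
  have "open A" unfolding A_def
    by (rule open_vimage[OF W(1)]) (rule tg_diff_cont[OF tg continuous_on_id continuous_on_const])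
  moreover have "y \<in> A" using W by (simp add: A_def)
  moreover have "H g x \<in> B" if "x \<in> A" for x
  proof -
    have ap2: "approx (\<lambda>t. g (t + x) * g t + (-1) * (g (t + y) * g t)) (H g x + (-1) * H g y)"
      by (intro approx_add approx_scale H_approx g)
    have xy: "x - y \<in> W" using that by (simp add: A_def)
    have bnd: "\<bar>g (t + x) * g t + (-1) * (g (t + y) * g t)\<bar> \<le> e/2" for t
    proof -
      have "\<bar>g (t + x) - g (t + y)\<bar> < e/2"
        using W(3)[OF xy, of "t + y"] by (simp add: dist_real_def algebra_simps)
      moreover have "\<bar>g (t + x) * g t + (-1) * (g (t + y) * g t)\<bar> = \<bar>g (t + x) - g (t + y)\<bar> * \<bar>g t\<bar>"
        by (simp add: abs_mult[symmetric] algebra_simps)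
      moreover have "\<bar>g (t + x) - g (t + y)\<bar> * \<bar>g t\<bar> \<le> (e/2) * 1"
        by (rule mult_mono) (use calculation(1) b[of t] e in auto)
      ultimately show ?thesis by simp
    qed
    have bl: "- (e/2) \<le> g (t + x) * g t + (-1) * (g (t + y) * g t)" for t
      using bnd[of t] by arith
    have bu: "g (t + x) * g t + (-1) * (g (t + y) * g t) \<le> e/2" for t
      using bnd[of t] by arith
    have "- (e/2) \<le> H g x + (-1) * H g y"
      by (rule approx_lower[OF ap2]) (rule bl)
    moreover have "H g x + (-1) * H g y \<le> e/2"
      by (rule approx_upper[OF ap2]) (rule bu)
    ultimately have "dist (H g x) (H g y) < e" using e by (simp add: dist_real_def abs_le_iff)
    then show ?thesis using e by (intro subsetD[OF e(2)]) (simp add: dist_commute)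
  qed
  ultimately show "\<exists>A. open A \<and> y \<in> A \<and> (\<forall>x\<in>UNIV. x \<in> A \<longrightarrow> H g x \<in> B)" by blast
qed

lemma H_quad:
  fixes n :: nat and a :: "nat \<Rightarrow> real" and x :: "nat \<Rightarrow> 'a"
  assumes g: "continuous_on UNIV g"
  shows "(\<Sum>i<n. \<Sum>j<n. a i * a j * H g (x i - x j)) = mean (\<lambda>s. (\<Sum>i<n. a i * g (s + x i))^2)"
proof -
  have "approx (\<lambda>s. \<Sum>i<n. \<Sum>j<n. a i * a j * (g (s + x i) * g (s + x j)))
               (\<Sum>i<n. \<Sum>j<n. a i * a j * H g (x i - x j))"
  proof -
    have h2: "approx (\<lambda>s. a i * a j * (g (s + x i) * g (s + x j))) (a i * a j * H g (x i - x j))" for i j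
      by (rule approx_scale[OF H_approx2[OF g]])
    have h1: "approx (\<lambda>s. \<Sum>j<n. a i * a j * (g (s + x i) * g (s + x j))) (\<Sum>j<n. a i * a j * H g (x i - x j))" for i
      by (rule approx_sum) (simp, rule h2)
    show ?thesis by (rule approx_sum) (simp, rule h1)
  qed
  moreover have "(\<lambda>s. \<Sum>i<n. \<Sum>j<n. a i * a j * (g (s + x i) * g (s + x j))) =
                 (\<lambda>s. (\<Sum>i<n. a i * g (s + x i))^2)"
  proof (rule ext)
    fix s
    have "(\<Sum>i<n. a i * g (s + x i))^2 = (\<Sum>i<n. a i * g (s + x i)) * (\<Sum>j<n. a j * g (s + x j))"
      by (simp only: power2_eq_square)
    also have "\<dots> = (\<Sum>i<n. \<Sum>j<n. (a i * g (s + x i)) * (a j * g (s + x j)))"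
      by (rule sum_product)
    also have "\<dots> = (\<Sum>i<n. \<Sum>j<n. a i * a j * (g (s + x i) * g (s + x j)))"
      by (intro sum.cong refl) (simp only: mult_ac)
    finally show "(\<Sum>i<n. \<Sum>j<n. a i * a j * (g (s + x i) * g (s + x j))) = (\<Sum>i<n. a i * g (s + x i))^2"
      by (rule sym)
  qed
  ultimately have "approx (\<lambda>s. (\<Sum>i<n. a i * g (s + x i))^2) (\<Sum>i<n. \<Sum>j<n. a i * a j * H g (x i - x j))"
    by (simp only:)
  then show ?thesis by (rule mean_eq[symmetric])
qed

lemma sq_cont: "continuous_on UNIV (g::'a\<Rightarrow>real) \<Longrightarrow> continuous_on UNIV (\<lambda>s. (\<Sum>i<(n::nat). (a::nat\<Rightarrow>real) i * g (s + (x::nat\<Rightarrow>'a) i))^2)"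
  by (intro continuous_on_power continuous_on_sum continuous_on_mult continuous_on_const shift_cont[OF tg])

lemma H_quad_nonneg:
  fixes n :: nat and a :: "nat \<Rightarrow> real" and x :: "nat \<Rightarrow> 'a"
  assumes g: "continuous_on UNIV g"
  shows "0 \<le> (\<Sum>i<n. \<Sum>j<n. a i * a j * H g (x i - x j))"
  unfolding H_quad[OF g] by (rule mean_lower[OF sq_cont[OF g]]) simp

lemma H_quad_pos:
  fixes n :: nat and a :: "nat \<Rightarrow> real" and x :: "nat \<Rightarrow> 'a"
  assumes g: "continuous_on UNIV g" and ne: "(\<Sum>i<n. a i * g (x i)) \<noteq> 0"
  shows "0 < (\<Sum>i<n. \<Sum>j<n. a i * a j * H g (x i - x j))"
  unfolding H_quad[OF g] by (rule mean_faithful[OF sq_cont[OF g], where p=0]) (use ne in simp_all)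

end




lemma sep_family:
  fixes ty :: "'a::{topological_space, ab_group_add} itself"
  assumes cpt: "compact (UNIV::'a set)" and met: "metrizable_space (euclidean :: 'a topology)"
  shows "\<exists>Gs::('a \<Rightarrow> real) set. countable Gs \<and> Gs \<noteq> {} \<and>
     (\<forall>g\<in>Gs. continuous_on UNIV g \<and> (\<forall>x. \<bar>g x\<bar> \<le> 1)) \<and>
     (\<forall>(n::nat) (x::nat\<Rightarrow>'a). 1 \<le> n \<longrightarrow> inj_on x {..<n} \<longrightarrow>
        (\<exists>g\<in>Gs. g (x 0) \<noteq> 0 \<and> (\<forall>j\<in>{1..<n}. g (x j) = 0)))"
proof -
  obtain M d where Md: "Metric_space M d" and eq: "(euclidean :: 'a topology) = Metric_space.mtopology M d"
    using met unfolding metrizable_space_def by blast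
  interpret Metric_space M d by (rule Md)
  have MU: "M = UNIV" using arg_cong[OF eq, of topspace] by simp
  have openeq: "open S \<longleftrightarrow> openin mtopology S" for S
    by (metis eq open_openin)
  have dcont: "continuous_on UNIV (\<lambda>x. d x p)" for p
    unfolding continuous_on_topological
  proof (intro ballI allI impI)
    fix y B assume "open B" "d y p \<in> B"
    then obtain e where e: "e > 0" "ball (d y p) e \<subseteq> B"
      using open_contains_ball by blast
    have yM: "y \<in> M" using MU by simp
    have "open (mball y e)" using openeq by simp
    moreover have "y \<in> mball y e" using e yM by simp
    moreover have "d x p \<in> B" if "x \<in> mball y e" for x
    proof -
      have "d y x < e" using that by simp
      moreover have "d y p \<le> d y x + d x p" "d x p \<le> d x y + d y p" using triangle MU by auto
      moreover have "d x y = d y x" by (rule commute)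
      ultimately have "dist (d y p) (d x p) < e" by (simp add: dist_real_def abs_if)
      then show ?thesis using e(2) by auto
    qed
    ultimately show "\<exists>A. open A \<and> y \<in> A \<and> (\<forall>x\<in>UNIV. x \<in> A \<longrightarrow> d x p \<in> B)" by blast
  qed
  have centers: "\<exists>F. finite F \<and> (\<forall>y. \<exists>p\<in>F. d y p < 1 / real (Suc n))" for n
  proof -
    define r where "r = 1 / real (Suc n)"
    have r: "r > 0" by (simp add: r_def)
    have "\<forall>p\<in>UNIV. open (mball p r)" using openeq by simp
    moreover have "UNIV \<subseteq> (\<Union>p\<in>UNIV. mball p r)"
    proof
      fix y :: 'a
      have yM: "y \<in> M" using MU by simp
      show "y \<in> (\<Union>p\<in>UNIV. mball p r)" using r yM by (intro UN_I[of y]) simp_all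
    qed
    ultimately obtain F where F: "finite F" "UNIV \<subseteq> (\<Union>p\<in>F. mball p r)"
      using compactE_image[OF cpt, of UNIV "\<lambda>p. mball p r"] by (metis subset_UNIV)
    have "\<exists>p\<in>F. d y p < r" for y
    proof -
      obtain p where "p \<in> F" "y \<in> mball p r" using F(2) by blast
      then show ?thesis using commute[of p y] by auto
    qed
    then show ?thesis using F(1) r_def by blast
  qed
  then obtain F where F: "\<And>n. finite (F n)" "\<And>n y. \<exists>p\<in>F n. d y p < 1 / real (Suc n)"
    by metis
  define bump where "bump n p x = max 0 (1 / real (Suc n) - d x p)" for n p x
  define Gs where "Gs = (\<Union>n. bump n ` F n)"
  have "countable Gs" unfolding Gs_def by (rule countable_UN) (simp_all add: countable_finite F(1))
  moreover have "Gs \<noteq> {}"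
  proof -
    obtain p where "p \<in> F 0" using F(2)[of 0 undefined] by blast
    then have "bump 0 p \<in> Gs" by (auto simp: Gs_def)
    then show ?thesis by blast
  qed
  moreover have "continuous_on UNIV g \<and> (\<forall>x. \<bar>g x\<bar> \<le> 1)" if "g \<in> Gs" for g
  proof -
    obtain n p where g: "g = bump n p" using \<open>g \<in> Gs\<close> by (auto simp: Gs_def)
    have "continuous_on UNIV g" unfolding g bump_def
      by (intro continuous_on_max continuous_on_const continuous_on_diff dcont)
    moreover have "\<bar>g x\<bar> \<le> 1" for x
    proof -
      have r1: "1 / real (Suc n) \<le> 1" by simp
      have r2: "0 \<le> d x p" by simp
      have u: "bump n p x \<le> 1" unfolding bump_def
        by (rule max.boundedI) (use r1 r2 in linarith)+
      have l: "0 \<le> bump n p x" unfolding bump_def by simp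
      show ?thesis using u l g by simp
    qed
    ultimately show ?thesis by blast
  qed
  moreover have "\<exists>g\<in>Gs. g (x 0) \<noteq> 0 \<and> (\<forall>j\<in>{1..<n}. g (x j) = 0)"
    if n: "1 \<le> n" and inj: "inj_on x {..<n}" for n and x :: "nat \<Rightarrow> 'a"
  proof -
    define S where "S = insert 1 ((\<lambda>j. d (x 0) (x j)) ` {1..<n})"
    define \<delta> where "\<delta> = Min S"
    have Sfin: "finite S" "S \<noteq> {}" by (auto simp: S_def)
    have pos: "d (x 0) (x j) > 0" if "j \<in> {1..<n}" for j
    proof -
      have "x 0 \<noteq> x j" using inj that n by (auto simp: inj_on_def)
      then show ?thesis using MU by (simp add: mdist_pos_less)
    qed
    have \<delta>pos: "\<delta> > 0" unfolding \<delta>_def using Sfin by (subst Min_gr_iff) (auto simp: S_def pos)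
    have \<delta>le: "\<delta> \<le> d (x 0) (x j)" if "j \<in> {1..<n}" for j
      unfolding \<delta>_def using Sfin that by (intro Min_le) (auto simp: S_def)
    obtain k where k: "1 / real (Suc k) < \<delta> / 2" using \<delta>pos nat_approx_posE[of "\<delta>/2"] by auto
    obtain p where p: "p \<in> F k" "d (x 0) p < 1 / real (Suc k)" using F(2) by blast
    have "bump k p \<in> Gs" using p(1) by (auto simp: Gs_def)
    moreover have "bump k p (x 0) \<noteq> 0" using p(2) by (simp add: bump_def)
    moreover have "bump k p (x j) = 0" if "j \<in> {1..<n}" for j
    proof -
      have "d (x 0) (x j) \<le> d (x 0) p + d p (x j)" using triangle MU by auto
      moreover have "d p (x j) = d (x j) p" by (rule commute)
      ultimately have "1 / real (Suc k) \<le> d (x j) p" using \<delta>le[OF that] p(2) k by linarith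
      then show ?thesis by (simp add: bump_def)
    qed
    ultimately show ?thesis by blast
  qed
  ultimately show ?thesis by blast
qed

lemma Re_term: "Re (c * cnj d * complex_of_real k) = (Re c * Re d + Im c * Im d) * k"
  by (simp add: algebra_simps)

lemma Im_term: "Im (c * cnj d * complex_of_real k) = (Im c * Re d - Re c * Im d) * k"
  by (simp add: algebra_simps)

lemma backward:
  fixes ty :: "'a::{topological_space, ab_group_add} itself"
  assumes tg: "topological_group TYPE('a)" and cpt: "compact (UNIV::'a set)"
    and met: "metrizable_space (euclidean :: 'a topology)"
  shows "\<exists>f :: 'a \<Rightarrow> complex. continuous_on UNIV f \<and> strictly_pos_def f"
proof -
  interpret C: cag "TYPE('a)" by unfold_locales (rule tg, rule cpt)
  obtain Gs :: "('a \<Rightarrow> real) set" where Gs: "countable Gs" "Gs \<noteq> {}"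
     "\<And>g. g\<in>Gs \<Longrightarrow> continuous_on UNIV g" "\<And>g x. g\<in>Gs \<Longrightarrow> \<bar>g x\<bar> \<le> 1"
     "\<And>(n::nat) (x::nat\<Rightarrow>'a). 1 \<le> n \<Longrightarrow> inj_on x {..<n} \<Longrightarrow>
        (\<exists>g\<in>Gs. g (x 0) \<noteq> 0 \<and> (\<forall>j\<in>{1..<n}. g (x j) = 0))"
    using sep_family[OF cpt met] by metis
  define e where "e = from_nat_into Gs"
  have eG: "e k \<in> Gs" for k unfolding e_def by (rule from_nat_into[OF Gs(2)])
  define Hk where "Hk k = C.H (e k)" for k
  have Hc: "continuous_on UNIV (Hk k)" for k unfolding Hk_def by (rule C.H_cont[OF Gs(3)[OF eG] Gs(4)[OF eG]])
  have Hb: "\<bar>Hk k y\<bar> \<le> 1" for k y unfolding Hk_def by (rule C.H_bound[OF Gs(3)[OF eG] Gs(4)[OF eG]])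
  have He: "Hk k (- y) = Hk k y" for k y unfolding Hk_def by (rule C.H_even[OF Gs(3)[OF eG]])
  define w :: "nat \<Rightarrow> real" where "w k = (1/2)^k" for k
  have wpos: "w k > 0" for k by (simp add: w_def)
  have sw: "summable w" unfolding w_def by (rule summable_geometric) simp
  have nb: "norm (w k * Hk k y) \<le> w k" for k y
    using Hb[of k y] wpos[of k] by (simp add: abs_mult mult_le_cancel_left1 less_imp_le)
  have sk: "summable (\<lambda>k. w k * Hk k y)" for y
    by (rule summable_comparison_test'[OF sw nb])
  define F where "F y = (\<Sum>k. w k * Hk k y)" for y
  have Fc: "continuous_on UNIV F"
  proof -
    have ul: "uniform_limit UNIV (\<lambda>n y. \<Sum>i<n. w i * Hk i y) (\<lambda>y. \<Sum>i. w i * Hk i y) sequentially"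
      by (rule Weierstrass_m_test[OF _ sw]) (rule nb)
    have ev: "\<forall>\<^sub>F n in sequentially. continuous_on UNIV (\<lambda>y. \<Sum>i<n. w i * Hk i y)"
      by (intro always_eventually allI continuous_on_sum continuous_on_mult continuous_on_const Hc)
    show ?thesis unfolding F_def by (rule uniform_limit_theorem[OF ev ul]) simp
  qed
  have Fe: "F (- y) = F y" for y by (simp add: F_def He)
  define f where "f y = complex_of_real (F y)" for y
  have "continuous_on UNIV f" unfolding f_def using Fc by simp
  moreover have "strictly_pos_def f"
    unfolding strictly_pos_def_def
  proof (intro allI impI)
    fix n :: nat and x :: "nat \<Rightarrow> 'a" and c :: "nat \<Rightarrow> complex"
    assume n: "1 \<le> n" and inj: "inj_on x {..<n}" and cnz: "\<forall>i<n. c i \<noteq> 0"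
    define a where "a i = Re (c i)" for i
    define b where "b i = Im (c i)" for i
    define K where "K i j = F (x i - x j)" for i j
    have Ks: "K j i = K i j" for i j
      using Fe[of "x i - x j"] by (simp add: K_def)
    have Im0: "Im (\<Sum>i<n. \<Sum>j<n. c i * cnj (c j) * f (x i - x j)) = 0"
    proof -
      have "Im (\<Sum>i<n. \<Sum>j<n. c i * cnj (c j) * f (x i - x j))
          = (\<Sum>i<n. \<Sum>j<n. b i * a j * K i j) - (\<Sum>i<n. \<Sum>j<n. a i * b j * K i j)"
        by (simp add: f_def Im_term a_def b_def K_def algebra_simps sum_subtractf)
      also have "(\<Sum>i<n. \<Sum>j<n. a i * b j * K i j) = (\<Sum>i<n. \<Sum>j<n. b i * a j * K i j)"
        by (subst sum.swap) (simp add: Ks mult_ac)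
      finally show ?thesis by simp
    qed
    define coef where "coef i j = a i * a j + b i * b j" for i j
    define T where "T k = (\<Sum>i<n. \<Sum>j<n. coef i j * (w k * Hk k (x i - x j)))" for k
    have ReEq: "Re (\<Sum>i<n. \<Sum>j<n. c i * cnj (c j) * f (x i - x j)) = (\<Sum>i<n. \<Sum>j<n. coef i j * K i j)"
      by (simp add: f_def Re_term a_def b_def K_def coef_def)
    have sT: "summable T" unfolding T_def
      by (intro summable_sum summable_mult sk)
    have RT: "(\<Sum>i<n. \<Sum>j<n. coef i j * K i j) = suminf T"
    proof -
      have "(\<Sum>i<n. \<Sum>j<n. coef i j * K i j) = (\<Sum>i<n. \<Sum>j<n. \<Sum>k. coef i j * (w k * Hk k (x i - x j)))"
        by (simp add: K_def F_def suminf_mult[OF sk])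
      also have "\<dots> = (\<Sum>i<n. \<Sum>k. \<Sum>j<n. coef i j * (w k * Hk k (x i - x j)))"
        by (intro sum.cong refl suminf_sum[symmetric] summable_mult sk)
      also have "\<dots> = (\<Sum>k. \<Sum>i<n. \<Sum>j<n. coef i j * (w k * Hk k (x i - x j)))"
        by (intro suminf_sum[symmetric] summable_sum summable_mult sk)
      finally show ?thesis by (simp add: T_def[abs_def])
    qed
    have Tq: "T k = w k * ((\<Sum>i<n. \<Sum>j<n. a i * a j * Hk k (x i - x j)) + (\<Sum>i<n. \<Sum>j<n. b i * b j * Hk k (x i - x j)))" for k
      by (simp add: T_def coef_def algebra_simps sum.distrib sum_distrib_left)
    have Tnn: "0 \<le> T k" for k
      unfolding Tq Hk_def using wpos[of k]
      by (intro mult_nonneg_nonneg add_nonneg_nonneg C.H_quad_nonneg Gs(3)[OF eG]) auto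
    obtain g where g: "g \<in> Gs" "g (x 0) \<noteq> 0" "\<And>j. j\<in>{1..<n} \<Longrightarrow> g (x j) = 0"
      using Gs(5)[OF n inj] by blast
    obtain k0 where k0: "e k0 = g" unfolding e_def using from_nat_into_surj[OF Gs(1) g(1)] by blast
    have split: "(\<Sum>i<n. v i * g (x i)) = v 0 * g (x 0)" for v
    proof -
      have "{..<n} = insert 0 {1..<n}" using n by auto
      then show ?thesis using g(3) by simp
    qed
    have "c 0 \<noteq> 0" using cnz n by simp
    then have "a 0 \<noteq> 0 \<or> b 0 \<noteq> 0" by (simp add: a_def b_def complex_eq_iff)
    then have "0 < (\<Sum>i<n. \<Sum>j<n. a i * a j * Hk k0 (x i - x j)) + (\<Sum>i<n. \<Sum>j<n. b i * b j * Hk k0 (x i - x j))"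
    proof
      assume "a 0 \<noteq> 0"
      then have "0 < (\<Sum>i<n. \<Sum>j<n. a i * a j * Hk k0 (x i - x j))"
        unfolding Hk_def k0 by (intro C.H_quad_pos Gs(3)[OF g(1)]) (simp add: split g(2))
      moreover have "0 \<le> (\<Sum>i<n. \<Sum>j<n. b i * b j * Hk k0 (x i - x j))"
        unfolding Hk_def by (rule C.H_quad_nonneg[OF Gs(3)[OF eG]])
      ultimately show ?thesis by linarith
    next
      assume "b 0 \<noteq> 0"
      then have "0 < (\<Sum>i<n. \<Sum>j<n. b i * b j * Hk k0 (x i - x j))"
        unfolding Hk_def k0 by (intro C.H_quad_pos Gs(3)[OF g(1)]) (simp add: split g(2))
      moreover have "0 \<le> (\<Sum>i<n. \<Sum>j<n. a i * a j * Hk k0 (x i - x j))"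
        unfolding Hk_def by (rule C.H_quad_nonneg[OF Gs(3)[OF eG]])
      ultimately show ?thesis by linarith
    qed
    then have "0 < T k0" unfolding Tq using wpos[of k0] by simp
    then have "0 < suminf T" using suminf_pos2[OF sT] Tnn by blast
    then show "0 < (\<Sum>i<n. \<Sum>j<n. c i * cnj (c j) * f (x i - x j))"
      using Im0 ReEq RT by (simp add: less_complex_def)
  qed
  ultimately show ?thesis by blast
qed


theorem corollary2p4:
  assumes "topological_group TYPE('a::{t2_space, ab_group_add})"
    and "compact (UNIV :: 'a set)"
  shows "(\<exists>f :: 'a \<Rightarrow> complex. continuous_on UNIV f \<and> strictly_pos_def f)
         \<longleftrightarrow> metrizable_space (euclidean :: 'a topology)"
proof
  assume "\<exists>f :: 'a \<Rightarrow> complex. continuous_on UNIV f \<and> strictly_pos_def f"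
  then obtain f :: "'a \<Rightarrow> complex" where "continuous_on UNIV f" "strictly_pos_def f" by blast
  then show "metrizable_space (euclidean :: 'a topology)" using forward[OF assms] by blast
next
  assume "metrizable_space (euclidean :: 'a topology)"
  then show "\<exists>f :: 'a \<Rightarrow> complex. continuous_on UNIV f \<and> strictly_pos_def f"
    by (rule backward[OF assms])
qed

end
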